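(* Let $F:\mathcal{G}_{\Sigma,\Delta,\pi}\to\mathcal{G}_{\Sigma,\Delta,\pi}$ be a causal graph dynamics with a monotonic local rule $f$ of radius $r$, and assume that $\mathrm{Conj}_F(R)$ is a singleton $\{\overline{F}(R)\}$ for every renaming $R$. Let $G$ be a graph. Then the cocone $\theta^G:\widetilde{f}\circ\mathrm{Proj}_{\widetilde{i}/G}\Rightarrow F(G)$ whose component at an object $((H,C),m:H\to G)$ of $\widetilde{i}/G$ is the morphism $\theta^G_{((H,C),m)}:\widetilde{f}((H,C))\to F(G)$ with underlying renaming $\overline{F}(|m|)$, is a universal cocone, i.e. $F(G)$ together with $\theta^G$ is a colimit of $\widetilde{f}\circ\mathrm{Proj}_{\widetilde{i}/G}$.
   Context: Fix an uncountably infinite set $\mathcal{V}$, sets $\Sigma,\Delta$, finite $\pi$. Graphs: countable $V(G)\subset\mathcal{V}$, a set $E(G)$ of pairwise disjoint two-element subsets of $V(G)\times\pi$, partial labelings $\sigma(G),\delta(G)$; $\subseteq$ is componentwise inclusion. Renamings: bijections of $\mathcal{V}$ acting naturally on graphs/pointed graphs. $\mathrm{Conj}_F(R)=\{R'\mid F\circ R=R'\circ F\}$. Disk $G^r_c$: vertices at distance $\le r+1$ from $c$, edges with an endpoint at distance $\le r$, vertex labels restricted to distance $\le r$; $\mathcal{D}^r$ radius-$r$ disks, compared by inclusion with equal centers. A local rule of radius $r$: $f:\mathcal{D}^r\to$ graphs with renaming covariance, preservation of empty intersections, bounded output size, consistency of $f(G^r_u),f(G^r_v)$; CGD $F(G)=\bigcup_{v\in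 V(G)}f(G^r_v)$. Category $\mathbf{G}_{\Sigma,\Delta,\pi}$: objects graphs, morphism $m:G\to H$ a renaming $|m|$ with $|m|(G)\subseteq H$. Category $\mathbf{D}^r_{\Sigma,\Delta,\pi}$: objects $(H,\{c\})$ for $(H,c)\in\mathcal{D}^r$ and $(\varnothing,\emptyset)$; morphisms $m:(H_1,C_1)\to(H_2,C_2)$ are morphisms $H_1\to H_2$ with $|m|(C_1)\subseteq C_2$. $\widetilde{i}:\mathbf{D}^r\to\mathbf{G}$ drops the second component. $\widetilde{f}:\mathbf{D}^r\to\mathbf{G}$: $\widetilde{f}((H,\{c\}))=f((H,c))$, $\widetilde{f}((\varnothing,\emptyset))=\varnothing$, $|\widetilde{f}(m)|=\overline{F}(|m|)$. The comma category $\widetilde{i}/G$ has objects $((H,C),m:H\to G)$ and morphisms $n:((H_1,C_1),m\circ n)\to((H_2,C_2),m)$ for $n$ in $\mathbf{D}^r$; $\mathrm{Proj}_{\widetilde{i}/G}:\widetilde{i}/G\to\mathbf{D}^r$ is the first projection. *)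

theory Defs
  imports Main "HOL-Library.Countable_Set"
begin

text \<open>Vertex names live in a type 'v (the set V of names, assumed uncountable in the
theorem), ports in a finite type 'p, vertex labels in 's, edge labels in 'd.\<close>

record ('v, 'p, 's, 'd) graph =
  gV :: "'v set"
  gE :: "('v \<times> 'p) set set"
  gsig :: "'v \<rightharpoonup> 's"
  gdel :: "('v \<times> 'p) set \<rightharpoonup> 'd"

definition wf_graph :: "('v, 'p, 's, 'd) graph \<Rightarrow> bool" where
  "wf_graph G \<longleftrightarrow> countable (gV G)
     \<and> (\<forall>e\<in>gE G. card e = 2 \<and> e \<subseteq> gV G \<times> UNIV)
     \<and> (\<forall>e1\<in>gE G. \<forall>e2\<in>gE G. e1 \<noteq> e2 \<longrightarrow> e1 \<inter> e2 = {})
     \<and> dom (gsig G) \<subseteq> gV G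
     \<and> dom (gdel G) \<subseteq> gE G"

definition empty_graph :: "('v, 'p, 's, 'd) graph" where
  "empty_graph = \<lparr>gV = {}, gE = {}, gsig = Map.empty, gdel = Map.empty\<rparr>"

definition subg :: "('v, 'p, 's, 'd) graph \<Rightarrow> ('v, 'p, 's, 'd) graph \<Rightarrow> bool" where
  "subg G H \<longleftrightarrow> gV G \<subseteq> gV H \<and> gE G \<subseteq> gE H \<and> gsig G \<subseteq>\<^sub>m gsig H \<and> gdel G \<subseteq>\<^sub>m gdel H"

text \<open>Two graphs are consistent if their union is again a graph.\<close>
definition consistent :: "('v, 'p, 's, 'd) graph \<Rightarrow> ('v, 'p, 's, 'd) graph \<Rightarrow> bool" where
  "consistent G H \<longleftrightarrow>
     (\<forall>e1\<in>gE G. \<forall>e2\<in>gE H. e1 \<noteq> e2 \<longrightarrow> e1 \<inter> e2 = {})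
     \<and> (\<forall>x \<in> dom (gsig G) \<inter> dom (gsig H). gsig G x = gsig H x)
     \<and> (\<forall>x \<in> dom (gdel G) \<inter> dom (gdel H). gdel G x = gdel H x)"

definition Gunion :: "('v, 'p, 's, 'd) graph set \<Rightarrow> ('v, 'p, 's, 'd) graph" where
  "Gunion S = \<lparr>gV = \<Union>(gV ` S), gE = \<Union>(gE ` S),
     gsig = (\<lambda>x. if \<exists>H\<in>S. gsig H x \<noteq> None then gsig (SOME H. H \<in> S \<and> gsig H x \<noteq> None) x else None),
     gdel = (\<lambda>x. if \<exists>H\<in>S. gdel H x \<noteq> None then gdel (SOME H. H \<in> S \<and> gdel H x \<noteq> None) x else None)\<rparr>"

definition ren_edge :: "('v \<Rightarrow> 'v) \<Rightarrow> ('v \<times> 'p) set \<Rightarrow> ('v \<times> 'p) set" where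
  "ren_edge R e = (\<lambda>(v, p). (R v, p)) ` e"

text \<open>Renamings are bijections of 'v; their natural action on graphs.\<close>
definition ren :: "('v \<Rightarrow> 'v) \<Rightarrow> ('v, 'p, 's, 'd) graph \<Rightarrow> ('v, 'p, 's, 'd) graph" where
  "ren R G = \<lparr>gV = R ` gV G, gE = ren_edge R ` gE G,
     gsig = gsig G \<circ> inv R, gdel = gdel G \<circ> ren_edge (inv R)\<rparr>"

definition ren_pt :: "('v \<Rightarrow> 'v) \<Rightarrow> ('v, 'p, 's, 'd) graph \<times> 'v \<Rightarrow> ('v, 'p, 's, 'd) graph \<times> 'v" where
  "ren_pt R D = (ren R (fst D), R (snd D))"

definition adj :: "('v, 'p, 's, 'd) graph \<Rightarrow> 'v \<Rightarrow> 'v \<Rightarrow> bool" where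
  "adj G u v \<longleftrightarrow> (\<exists>e\<in>gE G. \<exists>p q. e = {(u, p), (v, q)})"

fun nbhd :: "('v, 'p, 's, 'd) graph \<Rightarrow> 'v \<Rightarrow> nat \<Rightarrow> 'v set" where
  "nbhd G c 0 = {c}"
| "nbhd G c (Suc n) = nbhd G c n \<union> {v. \<exists>u\<in>nbhd G c n. adj G u v}"

definition disk_edges :: "('v, 'p, 's, 'd) graph \<Rightarrow> nat \<Rightarrow> 'v \<Rightarrow> ('v \<times> 'p) set set" where
  "disk_edges G r c = {e \<in> gE G. \<exists>v p. (v, p) \<in> e \<and> v \<in> nbhd G c r}"

definition disk :: "('v, 'p, 's, 'd) graph \<Rightarrow> nat \<Rightarrow> 'v \<Rightarrow> ('v, 'p, 's, 'd) graph" where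
  "disk G r c = \<lparr>gV = nbhd G c (Suc r), gE = disk_edges G r c,
     gsig = gsig G |` nbhd G c r, gdel = gdel G |` disk_edges G r c\<rparr>"

definition Disks :: "nat \<Rightarrow> (('v, 'p, 's, 'd) graph \<times> 'v) set" where
  "Disks r = {(disk G r c, c) | G c. wf_graph G \<and> c \<in> gV G}"

definition local_rule ::
  "nat \<Rightarrow> (('v, 'p, 's, 'd) graph \<times> 'v \<Rightarrow> ('v, 'p, 's, 'd) graph) \<Rightarrow> bool" where
  "local_rule r f \<longleftrightarrow>
     (\<forall>D\<in>Disks r. wf_graph (f D))
     \<and> (\<forall>R. bij R \<longrightarrow> (\<exists>R'. bij R' \<and> (\<forall>D\<in>Disks r. f (ren_pt R D) = ren R' (f D))))
     \<and> (\<forall>D1\<in>Disks r. \<forall>D2\<in>Disks r. gV (fst D1) \<inter> gV (fst D2) = {} \<longrightarrow> gV (f D1) \<inter> gV (f D2) = {})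
     \<and> (\<exists>b::nat. \<forall>D\<in>Disks r. finite (gV (f D)) \<and> card (gV (f D)) \<le> b)
     \<and> (\<forall>G. wf_graph G \<longrightarrow> (\<forall>u\<in>gV G. \<forall>v\<in>gV G. consistent (f (disk G r u, u)) (f (disk G r v, v))))"

definition monotonic_rule ::
  "nat \<Rightarrow> (('v, 'p, 's, 'd) graph \<times> 'v \<Rightarrow> ('v, 'p, 's, 'd) graph) \<Rightarrow> bool" where
  "monotonic_rule r f \<longleftrightarrow>
     (\<forall>D1\<in>Disks r. \<forall>D2\<in>Disks r. snd D1 = snd D2 \<and> subg (fst D1) (fst D2) \<longrightarrow> subg (f D1) (f D2))"

definition is_cgd ::
  "(('v, 'p, 's, 'd) graph \<Rightarrow> ('v, 'p, 's, 'd) graph) \<Rightarrow> nat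
     \<Rightarrow> (('v, 'p, 's, 'd) graph \<times> 'v \<Rightarrow> ('v, 'p, 's, 'd) graph) \<Rightarrow> bool" where
  "is_cgd F r f \<longleftrightarrow> local_rule r f
     \<and> (\<forall>G. wf_graph G \<longrightarrow> F G = Gunion {f (disk G r v, v) | v. v \<in> gV G})"

definition Conj ::
  "(('v, 'p, 's, 'd) graph \<Rightarrow> ('v, 'p, 's, 'd) graph) \<Rightarrow> ('v \<Rightarrow> 'v) \<Rightarrow> ('v \<Rightarrow> 'v) set" where
  "Conj F R = {R'. bij R' \<and> (\<forall>G. wf_graph G \<longrightarrow> F (ren R G) = ren R' (F G))}"

definition Fbar ::
  "(('v, 'p, 's, 'd) graph \<Rightarrow> ('v, 'p, 's, 'd) graph) \<Rightarrow> ('v \<Rightarrow> 'v) \<Rightarrow> ('v \<Rightarrow> 'v)" where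
  "Fbar F R = (THE R'. R' \<in> Conj F R)"

text \<open>Objects of D^r: (H,{c}) for (H,c) a disk, and (empty,{}).\<close>
definition Dobj :: "nat \<Rightarrow> ('v, 'p, 's, 'd) graph \<times> 'v set \<Rightarrow> bool" where
  "Dobj r HC \<longleftrightarrow> HC = (empty_graph, {}) \<or> (\<exists>c. snd HC = {c} \<and> (fst HC, c) \<in> Disks r)"

text \<open>n is (the renaming underlying) a morphism (H1,C1) -> (H2,C2) of D^r.\<close>
definition Dmor :: "('v, 'p, 's, 'd) graph \<times> 'v set \<Rightarrow> ('v, 'p, 's, 'd) graph \<times> 'v set \<Rightarrow> ('v \<Rightarrow> 'v) \<Rightarrow> bool" where
  "Dmor HC1 HC2 n \<longleftrightarrow> bij n \<and> subg (ren n (fst HC1)) (fst HC2) \<and> n ` snd HC1 \<subseteq> snd HC2"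

definition ftilde ::
  "(('v, 'p, 's, 'd) graph \<times> 'v \<Rightarrow> ('v, 'p, 's, 'd) graph) \<Rightarrow> ('v, 'p, 's, 'd) graph \<times> 'v set
     \<Rightarrow> ('v, 'p, 's, 'd) graph" where
  "ftilde f HC = (if snd HC = {} then empty_graph else f (fst HC, the_elem (snd HC)))"

text \<open>Objects ((H,C), m : H -> G) of the comma category i~/G.\<close>
definition comma_obj :: "nat \<Rightarrow> ('v, 'p, 's, 'd) graph
     \<Rightarrow> (('v, 'p, 's, 'd) graph \<times> 'v set \<times> ('v \<Rightarrow> 'v)) set" where
  "comma_obj r G = {(H, C, m). Dobj r (H, C) \<and> bij m \<and> subg (ren m H) G}"

text \<open>lam is a cocone over f~ o Proj_{i~/G} with vertex X: components
lam j : f~(H,C) -> X, compatible with every morphism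
n : ((H1,C1), m o n) -> ((H2,C2), m) of i~/G, whose image under f~ o Proj has
underlying renaming Fbar F n.\<close>
definition is_cocone ::
  "(('v, 'p, 's, 'd) graph \<Rightarrow> ('v, 'p, 's, 'd) graph) \<Rightarrow> nat
     \<Rightarrow> (('v, 'p, 's, 'd) graph \<times> 'v \<Rightarrow> ('v, 'p, 's, 'd) graph)
     \<Rightarrow> ('v, 'p, 's, 'd) graph
     \<Rightarrow> (('v, 'p, 's, 'd) graph \<times> 'v set \<times> ('v \<Rightarrow> 'v) \<Rightarrow> ('v \<Rightarrow> 'v))
     \<Rightarrow> ('v, 'p, 's, 'd) graph \<Rightarrow> bool" where
  "is_cocone F r f G lam X \<longleftrightarrow>
     (\<forall>(H, C, m) \<in> comma_obj r G. bij (lam (H, C, m)) \<and> subg (ren (lam (H, C, m)) (ftilde f (H, C))) X)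
     \<and> (\<forall>(H2, C2, m) \<in> comma_obj r G. \<forall>H1 C1 n. Dobj r (H1, C1) \<and> Dmor (H1, C1) (H2, C2) n
          \<longrightarrow> lam (H1, C1, m \<circ> n) = lam (H2, C2, m) \<circ> Fbar F n)"

definition theta ::
  "(('v, 'p, 's, 'd) graph \<Rightarrow> ('v, 'p, 's, 'd) graph)
     \<Rightarrow> ('v, 'p, 's, 'd) graph \<times> 'v set \<times> ('v \<Rightarrow> 'v) \<Rightarrow> ('v \<Rightarrow> 'v)" where
  "theta F j = Fbar F (snd (snd j))"

end

theory Submission
  imports Defs "HOL-Library.Countable_Set"
begin


lemma ren_edge_id: "ren_edge id e = e"
  by (auto simp: ren_edge_def)

lemma ren_id[simp]: "ren id G = G"
proof -
  have h: "ren_edge id = id" by (rule ext) (simp add: ren_edge_id)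
  show ?thesis unfolding ren_def h image_id comp_id inv_id by simp
qed

lemma ren_empty[simp]: "ren R empty_graph = empty_graph"
  by (simp add: ren_def empty_graph_def comp_def)

lemma subg_refl: "subg G G" by (simp add: subg_def)

lemma subg_trans: "subg A B \<Longrightarrow> subg B C \<Longrightarrow> subg A C"
  unfolding subg_def by (meson map_le_trans order_trans)

lemma subg_empty[simp]: "subg empty_graph G" by (simp add: subg_def empty_graph_def)

lemma ren_edge_comp: "ren_edge R (ren_edge S e) = ren_edge (R \<circ> S) e"
  by (auto simp: ren_edge_def image_iff)

lemma ren_comp: assumes "bij R" "bij S" shows "ren (R \<circ> S) G = ren R (ren S G)"
proof -
  have i: "inv (R \<circ> S) = inv S \<circ> inv R" using assms by (simp add: o_inv_distrib)
  have e: "ren_edge (R \<circ> S) = ren_edge R \<circ> ren_edge S" by (rule ext) (simp add: ren_edge_comp)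
  have e2: "ren_edge (inv S \<circ> inv R) = ren_edge (inv S) \<circ> ren_edge (inv R)" by (rule ext) (simp add: ren_edge_comp)
  show ?thesis unfolding ren_def i e e2 by (simp add: image_comp comp_assoc)
qed

lemma subg_ren: "subg A B \<Longrightarrow> subg (ren R A) (ren R B)"
  unfolding subg_def ren_def by (auto simp: map_le_def)

lemma ren_edge_inj: "inj R \<Longrightarrow> inj (\<lambda>(v::'v, p::'p). (R v, p))"
  by (auto simp: inj_def)

lemma wf_ren: assumes "bij R" "wf_graph G" shows "wf_graph (ren R G)"
proof -
  have injR: "inj R" using assms bij_is_inj by blast
  have inj2: "inj (\<lambda>(v, p). (R v, p))" using injR by (auto simp: inj_def)
  have RinvR: "\<And>x. R (inv R x) = x" using assms by (meson bij_inv_eq_iff)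
  have re: "\<And>e. ren_edge R (ren_edge (inv R) e) = e"
    by (simp add: ren_edge_comp RinvR comp_def ren_edge_def case_prod_unfold image_image)
  show ?thesis unfolding wf_graph_def
  proof (intro conjI ballI impI)
    show "countable (gV (ren R G))" using assms by (simp add: ren_def wf_graph_def)
  next
    fix e assume "e \<in> gE (ren R G)"
    then obtain e0 where e0: "e0 \<in> gE G" "e = ren_edge R e0" by (auto simp: ren_def)
    have "card e = card e0" using e0 inj2 by (simp add: ren_edge_def card_image inj_on_subset[OF inj2])
    then show "card e = 2" using e0 assms(2) by (simp add: wf_graph_def)
    show "e \<subseteq> gV (ren R G) \<times> UNIV" using e0 assms(2) by (force simp: wf_graph_def ren_def ren_edge_def)
  next
    fix e1 e2 assume "e1 \<in> gE (ren R G)" "e2 \<in> gE (ren R G)" "e1 \<noteq> e2"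
    then obtain a1 a2 where a: "a1 \<in> gE G" "e1 = ren_edge R a1" "a2 \<in> gE G" "e2 = ren_edge R a2"
      by (auto simp: ren_def)
    with \<open>e1 \<noteq> e2\<close> have "a1 \<noteq> a2" by auto
    then have "a1 \<inter> a2 = {}" using a assms(2) by (simp add: wf_graph_def)
    then show "e1 \<inter> e2 = {}" using a inj2 unfolding ren_edge_def by (metis image_Int image_empty)
  next
    show "dom (gsig (ren R G)) \<subseteq> gV (ren R G)"
    proof
      fix x assume "x \<in> dom (gsig (ren R G))"
      then have "inv R x \<in> gV G" using assms(2) by (auto simp: ren_def wf_graph_def)
      then have "R (inv R x) \<in> R ` gV G" by blast
      then show "x \<in> gV (ren R G)" using RinvR by (simp add: ren_def)
    qed
    show "dom (gdel (ren R G)) \<subseteq> gE (ren R G)"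
    proof
      fix x assume "x \<in> dom (gdel (ren R G))"
      then have "ren_edge (inv R) x \<in> gE G" using assms(2) by (auto simp: ren_def wf_graph_def)
      then have "ren_edge R (ren_edge (inv R) x) \<in> ren_edge R ` gE G" by blast
      then have "x \<in> ren_edge R ` gE G" by (simp only: re)
      then show "x \<in> gE (ren R G)" by (simp add: ren_def)
    qed
  qed
qed




lemma nbhd_Suc_sub: "nbhd G c n \<subseteq> nbhd G c (Suc n)" by auto

lemma nbhd_mono_n: "m \<le> n \<Longrightarrow> nbhd G c m \<subseteq> nbhd G c n"
proof (induction n)
  case 0 then show ?case by simp
next
  case (Suc n) then show ?case
    by (metis le_Suc_eq nbhd_Suc_sub order_trans order_refl)
qed

lemma c_in_nbhd: "c \<in> nbhd G c n"
  by (induction n) auto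

lemma adj_iff: "adj G u v \<longleftrightarrow> (\<exists>p q. {(u, p), (v, q)} \<in> gE G)"
  unfolding adj_def by auto

lemma adj_V: assumes "wf_graph G" "adj G u v" shows "v \<in> gV G"
proof -
  obtain p q where e: "{(u, p), (v, q)} \<in> gE G" using assms(2) unfolding adj_iff by blast
  moreover have "\<forall>e\<in>gE G. card e = 2 \<and> e \<subseteq> gV G \<times> UNIV" using assms(1) by (simp add: wf_graph_def)
  ultimately have "{(u, p), (v, q)} \<subseteq> gV G \<times> UNIV" by blast
  then show ?thesis by auto
qed

lemma nbhd_sub_V: assumes "wf_graph G" "c \<in> gV G" shows "nbhd G c n \<subseteq> gV G"
proof (induction n)
  case 0 then show ?case using assms by simp
next
  case (Suc n) then show ?case using adj_V[OF assms(1)] by auto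
qed

lemma adj_subg: "subg K G \<Longrightarrow> adj K u v \<Longrightarrow> adj G u v"
  unfolding adj_iff subg_def by (meson subsetD)

lemma nbhd_subg: assumes "subg K G" shows "nbhd K c n \<subseteq> nbhd G c n"
proof (induction n)
  case 0 then show ?case by simp
next
  case (Suc n) then show ?case using adj_subg[OF assms] by auto
qed

lemma map_le_restrict: "m1 \<subseteq>\<^sub>m m2 \<Longrightarrow> A \<subseteq> B \<Longrightarrow> m1 |` A \<subseteq>\<^sub>m m2 |` B"
  unfolding map_le_def restrict_map_def by (auto split: if_splits)

lemma disk_subg: assumes "subg K G" shows "subg (disk K r c) (disk G r c)"
proof -
  have n: "\<And>n. nbhd K c n \<subseteq> nbhd G c n" using nbhd_subg[OF assms] by blast
  have gE: "gE K \<subseteq> gE G" using assms by (simp add: subg_def)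
  have e: "disk_edges K r c \<subseteq> disk_edges G r c"
  proof
    fix e assume "e \<in> disk_edges K r c"
    then obtain v p where "e \<in> gE K" "(v, p) \<in> e" "v \<in> nbhd K c r" by (auto simp: disk_edges_def)
    then show "e \<in> disk_edges G r c" using n gE unfolding disk_edges_def by auto
  qed
  have s: "gsig K \<subseteq>\<^sub>m gsig G" "gdel K \<subseteq>\<^sub>m gdel G" using assms by (simp_all add: subg_def)
  show ?thesis unfolding subg_def
  proof (intro conjI)
    show "gV (disk K r c) \<subseteq> gV (disk G r c)" using n[of "Suc r"] by (simp add: disk_def del: nbhd.simps)
    show "gE (disk K r c) \<subseteq> gE (disk G r c)" using e by (simp add: disk_def)
    show "gsig (disk K r c) \<subseteq>\<^sub>m gsig (disk G r c)" using n s by (simp add: disk_def map_le_restrict)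
    show "gdel (disk K r c) \<subseteq>\<^sub>m gdel (disk G r c)" using e s by (simp add: disk_def map_le_restrict)
  qed
qed

lemma map_le_restrict1: "m |` A \<subseteq>\<^sub>m m"
  unfolding map_le_def restrict_map_def by (auto split: if_splits)

lemma disk_sub: assumes "wf_graph G" "c \<in> gV G" shows "subg (disk G r c) G"
  unfolding subg_def
proof (intro conjI)
  show "gV (disk G r c) \<subseteq> gV G" using nbhd_sub_V[OF assms, of "Suc r"] by (simp add: disk_def del: nbhd.simps)
  show "gE (disk G r c) \<subseteq> gE G" by (auto simp: disk_def disk_edges_def)
  show "gsig (disk G r c) \<subseteq>\<^sub>m gsig G" by (simp add: disk_def map_le_restrict1)
  show "gdel (disk G r c) \<subseteq>\<^sub>m gdel G" by (simp add: disk_def map_le_restrict1)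
qed

lemma card2_eq: assumes "card e = 2" "x \<in> e" "y \<in> e" "x \<noteq> y" shows "e = {x, y}"
proof -
  obtain a b where "e = {a, b}" "a \<noteq> b" using assms(1) card_2_iff by metis
  then show ?thesis using assms(2-4) by auto
qed

lemma wf_disk: assumes wf: "wf_graph G" and c: "c \<in> gV G" shows "wf_graph (disk G r c)"
  unfolding wf_graph_def
proof (intro conjI ballI impI)
  show "countable (gV (disk G r c))"
  proof -
    have "countable (gV G)" using wf by (simp add: wf_graph_def)
    then show ?thesis using nbhd_sub_V[OF assms, of "Suc r"] countable_subset
      by (simp add: disk_def del: nbhd.simps)
  qed
next
  fix e assume e: "e \<in> gE (disk G r c)"
  then have eG: "e \<in> gE G" and ex: "\<exists>v p. (v, p) \<in> e \<and> v \<in> nbhd G c r"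
    by (auto simp: disk_def disk_edges_def)
  show "card e = 2" using eG wf by (simp add: wf_graph_def)
  show "e \<subseteq> gV (disk G r c) \<times> UNIV"
  proof
    fix x assume x: "x \<in> e"
    obtain v p where vp: "(v, p) \<in> e" "v \<in> nbhd G c r" using ex by blast
    obtain w q where xw: "x = (w, q)" by (cases x)
    show "x \<in> gV (disk G r c) \<times> UNIV"
    proof (cases "x = (v, p)")
      case True then show ?thesis using vp by (auto simp: disk_def)
    next
      case False
      have "card e = 2" using eG wf by (simp add: wf_graph_def)
      then have "e = {(v, p), (w, q)}" using card2_eq vp x xw False by metis
      then have "adj G v w" using eG by (auto simp: adj_def)
      then show ?thesis using vp xw by (auto simp: disk_def)
    qed
  qed
next
  fix e1 e2 assume "e1 \<in> gE (disk G r c)" "e2 \<in> gE (disk G r c)" "e1 \<noteq> e2"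
  moreover have "\<forall>e1\<in>gE G. \<forall>e2\<in>gE G. e1 \<noteq> e2 \<longrightarrow> e1 \<inter> e2 = {}" using wf by (simp add: wf_graph_def)
  ultimately show "e1 \<inter> e2 = {}" by (simp add: disk_def disk_edges_def)
next
  show "dom (gsig (disk G r c)) \<subseteq> gV (disk G r c)" by (auto simp: disk_def)
  show "dom (gdel (disk G r c)) \<subseteq> gE (disk G r c)" by (auto simp: disk_def)
qed

lemma disk_self: assumes "wf_graph G0" shows "subg (disk G0 r c) (disk (disk G0 r c) r c)"
proof -
  let ?H = "disk G0 r c"
  have n: "n \<le> Suc r \<Longrightarrow> nbhd G0 c n \<subseteq> nbhd ?H c n" for n
  proof (induction n)
    case 0 then show ?case by simp
  next
    case (Suc n)
    have IH: "nbhd G0 c n \<subseteq> nbhd ?H c n" using Suc by simp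
    show ?case
    proof
      fix v assume "v \<in> nbhd G0 c (Suc n)"
      then consider "v \<in> nbhd G0 c n" | u where "u \<in> nbhd G0 c n" "adj G0 u v" by auto
      then show "v \<in> nbhd ?H c (Suc n)"
      proof cases
        case 1 then show ?thesis using IH by auto
      next
        case 2
        then obtain e p q where e: "e \<in> gE G0" "e = {(u, p), (v, q)}" unfolding adj_def by blast
        have "u \<in> nbhd G0 c r" using 2 Suc.prems nbhd_mono_n[of n r G0 c] by auto
        then have "e \<in> gE ?H" using e by (auto simp: disk_def disk_edges_def)
        then have "adj ?H u v" using e by (auto simp: adj_def)
        then show ?thesis using 2 IH by auto
      qed
    qed
  qed
  have nr: "nbhd G0 c r \<subseteq> nbhd ?H c r" using n by simp
  have ns: "nbhd G0 c (Suc r) \<subseteq> nbhd ?H c (Suc r)" using n[of "Suc r"] by (simp del: nbhd.simps)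
  have e: "disk_edges G0 r c \<subseteq> disk_edges ?H r c"
    using nr by (auto simp: disk_edges_def disk_def)
  show ?thesis unfolding subg_def
  proof (intro conjI)
    show "gV ?H \<subseteq> gV (disk ?H r c)" using ns by (simp add: disk_def)
    show "gE ?H \<subseteq> gE (disk ?H r c)" using e by (simp add: disk_def)
    show "gsig ?H \<subseteq>\<^sub>m gsig (disk ?H r c)" using nr
      unfolding disk_def map_le_def restrict_map_def by auto
    show "gdel ?H \<subseteq>\<^sub>m gdel (disk ?H r c)" using e
      unfolding map_le_def restrict_map_def by (auto simp: disk_def)
  qed
qed

lemma Gunion_upper:
  assumes "H \<in> S" "\<forall>H1\<in>S. \<forall>H2\<in>S. consistent H1 H2" shows "subg H (Gunion S)"
  unfolding subg_def
proof (intro conjI)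
  show "gV H \<subseteq> gV (Gunion S)" using assms by (auto simp: Gunion_def)
  show "gE H \<subseteq> gE (Gunion S)" using assms by (auto simp: Gunion_def)
  show "gsig H \<subseteq>\<^sub>m gsig (Gunion S)" unfolding map_le_def
  proof
    fix x assume x: "x \<in> dom (gsig H)"
    let ?H = "SOME H. H \<in> S \<and> gsig H x \<noteq> None"
    have ex: "\<exists>H\<in>S. gsig H x \<noteq> None" using x assms by auto
    then have "?H \<in> S \<and> gsig ?H x \<noteq> None" by (metis (mono_tags, lifting) someI_ex)
    then have "gsig H x = gsig ?H x" using assms x unfolding consistent_def by blast
    then show "gsig H x = gsig (Gunion S) x" using ex by (simp add: Gunion_def)
  qed
  show "gdel H \<subseteq>\<^sub>m gdel (Gunion S)" unfolding map_le_def
  proof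
    fix x assume x: "x \<in> dom (gdel H)"
    let ?H = "SOME H. H \<in> S \<and> gdel H x \<noteq> None"
    have ex: "\<exists>H\<in>S. gdel H x \<noteq> None" using x assms by auto
    then have "?H \<in> S \<and> gdel ?H x \<noteq> None" by (metis (mono_tags, lifting) someI_ex)
    then have "gdel H x = gdel ?H x" using assms x unfolding consistent_def by blast
    then show "gdel H x = gdel (Gunion S) x" using ex by (simp add: Gunion_def)
  qed
qed

lemma Gunion_least_ren:
  assumes "\<forall>H\<in>S. subg (ren u H) X" shows "subg (ren u (Gunion S)) X"
  unfolding subg_def
proof (intro conjI)
  have a: "\<forall>H\<in>S. u ` gV H \<subseteq> gV X" "\<forall>H\<in>S. ren_edge u ` gE H \<subseteq> gE X"
    using assms by (simp_all add: subg_def ren_def)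
  show "gV (ren u (Gunion S)) \<subseteq> gV X" using a(1) by (auto simp: Gunion_def ren_def)
  show "gE (ren u (Gunion S)) \<subseteq> gE X" using a(2) by (auto simp: Gunion_def ren_def)
  show "gsig (ren u (Gunion S)) \<subseteq>\<^sub>m gsig X" unfolding map_le_def
  proof
    fix x assume x: "x \<in> dom (gsig (ren u (Gunion S)))"
    let ?y = "inv u x"
    let ?H = "SOME H. H \<in> S \<and> gsig H ?y \<noteq> None"
    have ex: "\<exists>H\<in>S. gsig H ?y \<noteq> None" using x by (auto simp: ren_def Gunion_def split: if_splits)
    then have H: "?H \<in> S \<and> gsig ?H ?y \<noteq> None" by (metis (mono_tags, lifting) someI_ex)
    have eq: "gsig (ren u (Gunion S)) x = gsig (ren u ?H) x" using ex by (simp add: ren_def Gunion_def)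
    have "x \<in> dom (gsig (ren u ?H))" using H by (auto simp: ren_def)
    then have "gsig (ren u ?H) x = gsig X x" using H assms unfolding subg_def map_le_def by blast
    then show "gsig (ren u (Gunion S)) x = gsig X x" using eq by simp
  qed
  show "gdel (ren u (Gunion S)) \<subseteq>\<^sub>m gdel X" unfolding map_le_def
  proof
    fix x assume x: "x \<in> dom (gdel (ren u (Gunion S)))"
    let ?y = "ren_edge (inv u) x"
    let ?H = "SOME H. H \<in> S \<and> gdel H ?y \<noteq> None"
    have ex: "\<exists>H\<in>S. gdel H ?y \<noteq> None" using x by (auto simp: ren_def Gunion_def split: if_splits)
    then have H: "?H \<in> S \<and> gdel ?H ?y \<noteq> None" by (metis (mono_tags, lifting) someI_ex)
    have eq: "gdel (ren u (Gunion S)) x = gdel (ren u ?H) x" using ex by (simp add: ren_def Gunion_def)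
    have "x \<in> dom (gdel (ren u ?H))" using H by (auto simp: ren_def)
    then have "gdel (ren u ?H) x = gdel X x" using H assms unfolding subg_def map_le_def by blast
    then show "gdel (ren u (Gunion S)) x = gdel X x" using eq by simp
  qed
qed




lemma comma_objD: "(H, C, m) \<in> comma_obj r G \<Longrightarrow> Dobj r (H, C) \<and> bij m \<and> subg (ren m H) G"
  by (simp add: comma_obj_def)

lemma comma_objI: "Dobj r (H, C) \<Longrightarrow> bij m \<Longrightarrow> subg (ren m H) G \<Longrightarrow> (H, C, m) \<in> comma_obj r G"
  by (simp add: comma_obj_def)

lemma disk_in_Disks: "wf_graph G \<Longrightarrow> c \<in> gV G \<Longrightarrow> (disk G r c, c) \<in> Disks r"
  by (auto simp: Disks_def)

lemma ftilde_empty[simp]: "ftilde f (H, {}) = empty_graph" by (simp add: ftilde_def)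
lemma ftilde_single[simp]: "ftilde f (H, {c}) = f (H, c)" by (simp add: ftilde_def)

locale cgdloc =
  fixes F :: "('v, 'p, 's, 'd) graph \<Rightarrow> ('v, 'p, 's, 'd) graph"
    and f :: "('v, 'p, 's, 'd) graph \<times> 'v \<Rightarrow> ('v, 'p, 's, 'd) graph"
    and r :: nat
  assumes cgd: "is_cgd F r f"
    and mon: "monotonic_rule r f"
    and cj: "\<forall>R. bij R \<longrightarrow> Conj F R = {Fbar F R}"
begin

lemma Fbar_in: "bij R \<Longrightarrow> Fbar F R \<in> Conj F R"
  using cj by auto

lemma Fbar_bij: "bij R \<Longrightarrow> bij (Fbar F R)"
  using Fbar_in by (simp add: Conj_def)

lemma Fbar_ren: "bij R \<Longrightarrow> wf_graph K \<Longrightarrow> F (ren R K) = ren (Fbar F R) (F K)"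
  using Fbar_in by (simp add: Conj_def)

lemma Fbar_id: "Fbar F id = id"
proof -
  have "id \<in> Conj F id" by (simp add: Conj_def)
  then show ?thesis using cj by auto
qed

lemma Fbar_comp: assumes "bij R" "bij S" shows "Fbar F R \<circ> Fbar F S = Fbar F (R \<circ> S)"
proof -
  have "Fbar F R \<circ> Fbar F S \<in> Conj F (R \<circ> S)"
    unfolding Conj_def
  proof (intro CollectI conjI allI impI)
    show "bij (Fbar F R \<circ> Fbar F S)" using assms Fbar_bij bij_comp by blast
    fix K :: "('v, 'p, 's, 'd) graph" assume K: "wf_graph K"
    have "F (ren (R \<circ> S) K) = F (ren R (ren S K))" using assms by (simp add: ren_comp)
    also have "\<dots> = ren (Fbar F R) (F (ren S K))" using assms K wf_ren Fbar_ren by blast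
    also have "\<dots> = ren (Fbar F R) (ren (Fbar F S) (F K))" using assms K Fbar_ren by simp
    also have "\<dots> = ren (Fbar F R \<circ> Fbar F S) (F K)" using assms Fbar_bij by (simp add: ren_comp)
    finally show "F (ren (R \<circ> S) K) = ren (Fbar F R \<circ> Fbar F S) (F K)" .
  qed
  then show ?thesis using cj assms bij_comp by blast
qed

lemma lr: "local_rule r f" using cgd by (simp add: is_cgd_def)

lemma F_eq: "wf_graph K \<Longrightarrow> F K = Gunion {f (disk K r v, v) | v. v \<in> gV K}"
  using cgd by (simp add: is_cgd_def)

lemma piece_le: assumes "wf_graph K" "v \<in> gV K" shows "subg (f (disk K r v, v)) (F K)"
proof -
  have c: "\<forall>u\<in>gV K. \<forall>w\<in>gV K. consistent (f (disk K r u, u)) (f (disk K r w, w))"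
  proof -
    have "\<forall>G. wf_graph G \<longrightarrow> (\<forall>u\<in>gV G. \<forall>v\<in>gV G. consistent (f (disk G r u, u)) (f (disk G r v, v)))"
      using lr by (simp add: local_rule_def)
    then show ?thesis using assms(1) by simp
  qed
  have "\<forall>H1\<in>{f (disk K r v, v) | v. v \<in> gV K}. \<forall>H2\<in>{f (disk K r v, v) | v. v \<in> gV K}. consistent H1 H2"
    using c by blast
  then have "subg (f (disk K r v, v)) (Gunion {f (disk K r v, v) | v. v \<in> gV K})"
    using assms(2) by (intro Gunion_upper) auto
  then show ?thesis using F_eq[OF assms(1)] by simp
qed

lemma monoD: "D1 \<in> Disks r \<Longrightarrow> D2 \<in> Disks r \<Longrightarrow> snd D1 = snd D2 \<Longrightarrow> subg (fst D1) (fst D2)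
   \<Longrightarrow> subg (f D1) (f D2)"
  using mon by (simp add: monotonic_rule_def)

lemma F_mono: assumes K: "wf_graph K" and G: "wf_graph G" and s: "subg K G"
  shows "subg (F K) (F G)"
proof -
  have "\<forall>H\<in>{f (disk K r v, v) | v. v \<in> gV K}. subg (ren id H) (F G)"
  proof
    fix H assume "H \<in> {f (disk K r v, v) | v. v \<in> gV K}"
    then obtain v where v: "v \<in> gV K" "H = f (disk K r v, v)" by blast
    have "gV K \<subseteq> gV G" using s by (simp add: subg_def)
    then have vG: "v \<in> gV G" using v by blast
    have "subg (f (disk K r v, v)) (f (disk G r v, v))"
      using monoD[OF disk_in_Disks[OF K v(1)] disk_in_Disks[OF G vG]] disk_subg[OF s] by simp
    then show "subg (ren id H) (F G)" using v subg_trans[OF _ piece_le[OF G vG]] by simp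
  qed
  then have "subg (ren id (Gunion {f (disk K r v, v) | v. v \<in> gV K})) (F G)"
    by (rule Gunion_least_ren)
  then show ?thesis using F_eq[OF K] by simp
qed

lemma key: assumes D: "(H, c) \<in> Disks r" and m: "bij m" and s: "subg (ren m H) G" and G: "wf_graph G"
  shows "subg (ren (Fbar F m) (f (H, c))) (F G)"
proof -
  have "\<exists>G0. H = disk G0 r c \<and> wf_graph G0 \<and> c \<in> gV G0"
    using D unfolding Disks_def by blast
  then obtain G0 where G0: "H = disk G0 r c" "wf_graph G0" "c \<in> gV G0" by blast
  have wH: "wf_graph H" using G0(1) wf_disk[OF G0(2,3)] by simp
  have cH: "c \<in> gV H" using G0(1) c_in_nbhd[of c G0 "Suc r"] by (simp add: disk_def del: nbhd.simps)
  have "subg H (disk H r c)" using G0(1) disk_self[OF G0(2)] by simp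
  then have "subg (f (H, c)) (f (disk H r c, c))"
    using monoD[OF D disk_in_Disks[OF wH cH]] by simp
  then have "subg (f (H, c)) (F H)" using subg_trans[OF _ piece_le[OF wH cH]] by simp
  then have a0: "subg (ren (Fbar F m) (f (H, c))) (ren (Fbar F m) (F H))" by (rule subg_ren)
  have eq: "ren (Fbar F m) (F H) = F (ren m H)" using Fbar_ren[OF m wH] by simp
  have a: "subg (ren (Fbar F m) (f (H, c))) (F (ren m H))" using a0 eq by simp
  have "subg (F (ren m H)) (F G)" using F_mono[OF wf_ren[OF m wH] G s] .
  then show ?thesis using subg_trans[OF a] by simp
qed

end




theorem proposition4p22:
  fixes F :: "('v, 'p::finite, 's, 'd) graph \<Rightarrow> ('v, 'p, 's, 'd) graph"
    and f :: "('v, 'p, 's, 'd) graph \<times> 'v \<Rightarrow> ('v, 'p, 's, 'd) graph"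
    and r :: nat
    and G :: "('v, 'p, 's, 'd) graph"
  assumes "\<not> countable (UNIV :: 'v set)"
    and "is_cgd F r f"
    and "monotonic_rule r f"
    and "\<forall>R. bij R \<longrightarrow> Conj F R = {Fbar F R}"
    and "wf_graph G"
  shows "is_cocone F r f G (theta F) (F G)
    \<and> (\<forall>X lam. wf_graph X \<longrightarrow> is_cocone F r f G lam X \<longrightarrow>
         (\<exists>!u. bij u \<and> subg (ren u (F G)) X
               \<and> (\<forall>j \<in> comma_obj r G. lam j = u \<circ> theta F j)))"
proof -
  interpret L: cgdloc F f r using assms(2-4) by unfold_locales
  have wG: "wf_graph G" by (rule assms(5))
  have j0: "(empty_graph, {}, id) \<in> comma_obj r G"
    by (rule comma_objI) (simp_all add: Dobj_def)
  have Dobj0: "Dobj r (empty_graph, {})" by (simp add: Dobj_def)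
  have p1: "bij (theta F (H, C, m)) \<and> subg (ren (theta F (H, C, m)) (ftilde f (H, C))) (F G)"
    if j: "(H, C, m) \<in> comma_obj r G" for H C m
  proof -
    have o: "Dobj r (H, C)" and m: "bij m" and s: "subg (ren m H) G" using j by (simp_all add: comma_obj_def)
    have b: "bij (theta F (H, C, m))" using L.Fbar_bij[OF m] by (simp add: theta_def)
    have "subg (ren (theta F (H, C, m)) (ftilde f (H, C))) (F G)"
    proof (cases "(H, C) = (empty_graph, {})")
      case True then show ?thesis by simp
    next
      case False
      then obtain c where C: "C = {c}" and D: "(H, c) \<in> Disks r" using o unfolding Dobj_def by auto
      show ?thesis using L.key[OF D m s wG] C by (simp add: theta_def)
    qed
    then show ?thesis using b by blast
  qed
  have p2: "theta F (H1, C1, m \<circ> n) = theta F (H2, C2, m) \<circ> Fbar F n"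
    if j: "(H2, C2, m) \<in> comma_obj r G" and d: "Dobj r (H1, C1) \<and> Dmor (H1, C1) (H2, C2) n" for H2 C2 m H1 C1 n
  proof -
    have m: "bij m" and n: "bij n" using j d by (simp_all add: comma_obj_def Dmor_def)
    show ?thesis using L.Fbar_comp[OF m n] by (simp add: theta_def)
  qed
  have cc1: "is_cocone F r f G (theta F) (F G)"
    unfolding is_cocone_def using p1 p2 by auto
  have univ: "\<exists>!u. bij u \<and> subg (ren u (F G)) X \<and> (\<forall>j \<in> comma_obj r G. lam j = u \<circ> theta F j)"
    if X: "wf_graph X" and cc: "is_cocone F r f G lam X" for X lam
  proof -
    define u where "u = lam (empty_graph, {}, id)"
    have c1: "\<forall>(H, C, m) \<in> comma_obj r G. bij (lam (H, C, m)) \<and> subg (ren (lam (H, C, m)) (ftilde f (H, C))) X"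
      and c2: "\<forall>(H2, C2, m) \<in> comma_obj r G. \<forall>H1 C1 n. Dobj r (H1, C1) \<and> Dmor (H1, C1) (H2, C2) n
          \<longrightarrow> lam (H1, C1, m \<circ> n) = lam (H2, C2, m) \<circ> Fbar F n"
      using cc unfolding is_cocone_def by blast+
    have ub: "bij u" using c1 j0 unfolding u_def by blast
    have eq: "lam (H, C, m) = u \<circ> Fbar F m" if j: "(H, C, m) \<in> comma_obj r G" for H C m
    proof -
      have m: "bij m" using j by (simp add: comma_obj_def)
      have im: "bij (inv m)" using m bij_imp_bij_inv by blast
      have "Dmor (empty_graph, {}) (H, C) (inv m)" using im by (simp add: Dmor_def)
      then have "lam (empty_graph, {}, m \<circ> inv m) = lam (H, C, m) \<circ> Fbar F (inv m)"
        using c2 j Dobj0 by blast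
      moreover have "m \<circ> inv m = id" using m bij_is_surj surj_iff by blast
      ultimately have a: "u = lam (H, C, m) \<circ> Fbar F (inv m)" by (simp add: u_def)
      have "inv m \<circ> m = id" using m bij_is_inj inj_iff by blast
      then have "Fbar F (inv m) \<circ> Fbar F m = id" using L.Fbar_comp[OF im m] L.Fbar_id by simp
      then show ?thesis using a by (simp add: comp_assoc)
    qed
    have sub: "subg (ren u (F G)) X"
    proof -
      have "\<forall>H\<in>{f (disk G r v, v) | v. v \<in> gV G}. subg (ren u H) X"
      proof
        fix H assume "H \<in> {f (disk G r v, v) | v. v \<in> gV G}"
        then obtain v where v: "v \<in> gV G" "H = f (disk G r v, v)" by blast
        have "Dobj r (disk G r v, {v})" using disk_in_Disks[OF wG v(1)] by (simp add: Dobj_def)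
        then have j: "(disk G r v, {v}, id) \<in> comma_obj r G"
          using disk_sub[OF wG v(1)] by (intro comma_objI) simp_all
        then have "subg (ren (lam (disk G r v, {v}, id)) (ftilde f (disk G r v, {v}))) X"
          using c1 by blast
        moreover have "lam (disk G r v, {v}, id) = u" using eq[OF j] L.Fbar_id by simp
        ultimately show "subg (ren u H) X" using v by simp
      qed
      then have "subg (ren u (Gunion {f (disk G r v, v) | v. v \<in> gV G})) X" by (rule Gunion_least_ren)
      then show ?thesis using L.F_eq[OF wG] by simp
    qed
    have comm: "\<forall>j \<in> comma_obj r G. lam j = u \<circ> theta F j"
    proof
      fix j assume "j \<in> comma_obj r G"
      moreover obtain H C m where "j = (H, C, m)" by (cases j) auto
      ultimately show "lam j = u \<circ> theta F j" using eq by (simp add: theta_def)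
    qed
    show ?thesis
    proof (rule ex1I[of _ u])
      show "bij u \<and> subg (ren u (F G)) X \<and> (\<forall>j\<in>comma_obj r G. lam j = u \<circ> theta F j)"
        using ub sub comm by blast
    next
      fix u' assume "bij u' \<and> subg (ren u' (F G)) X \<and> (\<forall>j\<in>comma_obj r G. lam j = u' \<circ> theta F j)"
      then have "lam (empty_graph, {}, id) = u' \<circ> theta F (empty_graph, {}, id)" using j0 by blast
      then show "u' = u" using L.Fbar_id by (simp add: u_def theta_def)
    qed
  qed
  show ?thesis using cc1 univ by blast
qed


end
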